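(* If $P$ is the Petersen graph, then $\operatorname{H}(P)=6$.
   Context: All graphs are finite, simple and undirected. In hopping forcing each vertex is colored blue or white, and initially a set $B\subseteq V(G)$ is blue. The hopping color change rule: a blue vertex $v$ may force a white vertex $w$ to become blue if $v$ has not previously performed a force and every neighbor of $v$ is blue. A chronological list of forces of $B$ is a sequence of such forces applied one at a time starting from $B$ until no further force is possible. $B$ is a hopping forcing set if some chronological list of forces of $B$ turns every vertex blue. $\operatorname{H}(G)$ is the minimum size of a hopping forcing set of $G$. *)

theory Defs
  imports Main
begin

text \<open>A finite simple graph is given by a finite vertex set V and a symmetric,
irreflexive adjacency relation E (only its restriction to V matters).\<close>

text \<open>A state is a pair (S, U): S is the set of blue vertices,
U the set of vertices that have already performed a force. hop_reach V E B st
holds iff st is reachable from (B, {}) by a finite sequence of hopping forces.\<close>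

inductive hop_reach :: "'a set \<Rightarrow> ('a \<Rightarrow> 'a \<Rightarrow> bool) \<Rightarrow> 'a set \<Rightarrow> 'a set \<times> 'a set \<Rightarrow> bool"
  for V :: "'a set" and E :: "'a \<Rightarrow> 'a \<Rightarrow> bool" and B :: "'a set" where
  init: "hop_reach V E B (B, {})"
| step: "\<lbrakk> hop_reach V E B (S, U); v \<in> S; v \<notin> U;
           \<forall>u\<in>V. E v u \<longrightarrow> u \<in> S; w \<in> V; w \<notin> S \<rbrakk>
         \<Longrightarrow> hop_reach V E B (insert w S, insert v U)"

text \<open>B is a hopping forcing set if some chronological list of forces turns every
vertex blue (once all vertices are blue no further force is possible, so such a
finite sequence of forces is a complete chronological list).\<close>

definition hopping_forcing_set :: "'a set \<Rightarrow> ('a \<Rightarrow> 'a \<Rightarrow> bool) \<Rightarrow> 'a set \<Rightarrow> bool" where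
  "hopping_forcing_set V E B \<longleftrightarrow> B \<subseteq> V \<and> (\<exists>U. hop_reach V E B (V, U))"

definition hopping_number :: "'a set \<Rightarrow> ('a \<Rightarrow> 'a \<Rightarrow> bool) \<Rightarrow> nat" where
  "hopping_number V E = (LEAST k. \<exists>B. hopping_forcing_set V E B \<and> card B = k)"

text \<open>The Petersen graph as the Kneser graph K(5,2): vertices are the 2-element
subsets of {0,...,4}, two vertices adjacent iff they are disjoint.\<close>

definition petersen_V :: "nat set set" where
  "petersen_V = {A. A \<subseteq> {0..<5} \<and> card A = 2}"

definition petersen_E :: "nat set \<Rightarrow> nat set \<Rightarrow> bool" where
  "petersen_E A C \<longleftrightarrow> A \<in> petersen_V \<and> C \<in> petersen_V \<and> A \<inter> C = {}"

end

theory Submission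
  imports Defs
begin

definition vs :: "nat set list" where
 "vs = [{0,1},{0,2},{0,3},{0,4},{1,2},{1,3},{1,4},{2,3},{2,4},{3,4}]"

definition tbl :: "nat list list" where
 "tbl = [[0, 7, 8, 9], [1, 5, 6, 9], [2, 4, 6, 8], [3, 4, 5, 7], [4, 2, 3, 9], [5, 1, 3, 8], [6, 1, 2, 7], [7, 0, 3, 6], [8, 0, 2, 5], [9, 0, 1, 4]]"

lemma lt_1: "(x::nat) < 1 \<longleftrightarrow> x = 0" by auto
lemma lt_2: "(x::nat) < 2 \<longleftrightarrow> x = 0 \<or> x = 1" by auto
lemma lt_3: "(x::nat) < 3 \<longleftrightarrow> x = 0 \<or> x = 1 \<or> x = 2" by auto
lemma lt_4: "(x::nat) < 4 \<longleftrightarrow> x = 0 \<or> x = 1 \<or> x = 2 \<or> x = 3" by auto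
lemma lt_5: "(x::nat) < 5 \<longleftrightarrow> x = 0 \<or> x = 1 \<or> x = 2 \<or> x = 3 \<or> x = 4" by auto
lemma lt_6: "(x::nat) < 6 \<longleftrightarrow> x = 0 \<or> x = 1 \<or> x = 2 \<or> x = 3 \<or> x = 4 \<or> x = 5" by auto
lemma lt_7: "(x::nat) < 7 \<longleftrightarrow> x = 0 \<or> x = 1 \<or> x = 2 \<or> x = 3 \<or> x = 4 \<or> x = 5 \<or> x = 6" by auto
lemma lt_8: "(x::nat) < 8 \<longleftrightarrow> x = 0 \<or> x = 1 \<or> x = 2 \<or> x = 3 \<or> x = 4 \<or> x = 5 \<or> x = 6 \<or> x = 7" by auto
lemma lt_9: "(x::nat) < 9 \<longleftrightarrow> x = 0 \<or> x = 1 \<or> x = 2 \<or> x = 3 \<or> x = 4 \<or> x = 5 \<or> x = 6 \<or> x = 7 \<or> x = 8" by auto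
lemma lt_10: "(x::nat) < 10 \<longleftrightarrow> x = 0 \<or> x = 1 \<or> x = 2 \<or> x = 3 \<or> x = 4 \<or> x = 5 \<or> x = 6 \<or> x = 7 \<or> x = 8 \<or> x = 9" by auto
lemma V_eq: "petersen_V = set vs"
proof
  show "petersen_V \<subseteq> set vs"
  proof
    fix A assume "A \<in> petersen_V"
    then have s: "A \<subseteq> {0..<5}" and c: "card A = 2" by (auto simp: petersen_V_def)
    from c obtain x y where A: "A = {x,y}" "x \<noteq> y" by (auto simp: card_2_iff)
    from s A have "x < 5" "y < 5" by auto
    then show "A \<in> set vs" using A unfolding vs_def lt_5
      by (auto simp: doubleton_eq_iff)
  qed
  show "set vs \<subseteq> petersen_V" by (auto simp: vs_def petersen_V_def)
qed

lemma dvs: "distinct vs" by code_simp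
lemma len_vs: "length vs = 10" by (simp add: vs_def)
lemma card_V: "card petersen_V = 10" using V_eq dvs len_vs distinct_card by metis
lemma fin_V: "finite petersen_V" by (simp add: V_eq)

lemma tbl_ok: "\<forall>i<10. tbl ! i = i # filter (\<lambda>j. vs!i \<inter> vs!j = {}) [0..<10]"
  by code_simp

lemma trip: assumes "k<j" "j<i" "i<(10::nat)" shows "8 \<le> card (set (tbl!i) \<union> set (tbl!j) \<union> set (tbl!k))"
  using assms unfolding lt_10 apply (auto simp: lt_1 lt_2 lt_3 lt_4 lt_5 lt_6 lt_7 lt_8 lt_9 tbl_def) by (simp_all add: card_insert_if)

lemma trip2:
  assumes "i<(10::nat)" "j<10" "k<10" "i\<noteq>j" "i\<noteq>k" "j\<noteq>k"
  shows "8 \<le> card (set (tbl!i) \<union> set (tbl!j) \<union> set (tbl!k))"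
proof -
  let ?T = "\<lambda>x. set (tbl!x)"
  have "i<j \<or> j<i" "i<k \<or> k<i" "j<k \<or> k<j" using assms by auto
  then consider "k<j" "j<i" | "j<k" "k<i" | "k<i" "i<j" | "i<k" "k<j" | "j<i" "i<k" | "i<j" "j<k"
    by (meson less_trans)
  then show ?thesis
  proof cases
    case 1 then show ?thesis using trip[of k j i] assms by simp
  next
    case 2 then show ?thesis using trip[of j k i] assms by (simp add: Un_ac)
  next
    case 3 then show ?thesis using trip[of k i j] assms by (simp add: Un_ac)
  next
    case 4 then show ?thesis using trip[of i k j] assms by (simp add: Un_ac)
  next
    case 5 then show ?thesis using trip[of j i k] assms by (simp add: Un_ac)
  next
    case 6 then show ?thesis using trip[of i j k] assms by (simp add: Un_ac)
  qed
qed

definition Nc :: "nat set \<Rightarrow> nat set set" where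
  "Nc a = insert a {u\<in>petersen_V. petersen_E a u}"

lemma Nc_idx:
  assumes "i < 10"
  shows "Nc (vs!i) = (!) vs ` set (tbl!i)"
proof -
  have iv: "vs!i \<in> petersen_V" using assms V_eq len_vs by auto
  have "{u\<in>petersen_V. petersen_E (vs!i) u} = {u\<in>set vs. vs!i \<inter> u = {}}"
    using iv V_eq by (auto simp: petersen_E_def)
  also have "\<dots> = (!) vs ` {j. j<10 \<and> vs!i \<inter> vs!j = {}}"
    using len_vs by (auto simp: in_set_conv_nth)
  finally have "Nc (vs!i) = insert (vs!i) ((!) vs ` {j. j<10 \<and> vs!i \<inter> vs!j = {}})"
    by (simp add: Nc_def)
  also have "\<dots> = (!) vs ` (insert i {j. j<10 \<and> vs!i \<inter> vs!j = {}})" by simp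
  also have "insert i {j. j<10 \<and> vs!i \<inter> vs!j = {}} = set (tbl!i)"
    using tbl_ok assms by auto
  finally show ?thesis .
qed

lemma tbl_sub: "i < 10 \<Longrightarrow> set (tbl!i) \<subseteq> {0..<10}"
  using tbl_ok by auto

lemma key:
  assumes "a \<in> petersen_V" "b \<in> petersen_V" "c \<in> petersen_V" "a\<noteq>b" "a\<noteq>c" "b\<noteq>c"
  shows "8 \<le> card (Nc a \<union> Nc b \<union> Nc c)"
proof -
  obtain i where i: "i<10" "a = vs!i" using assms(1) V_eq len_vs in_set_conv_nth by metis
  obtain j where j: "j<10" "b = vs!j" using assms(2) V_eq len_vs in_set_conv_nth by metis
  obtain k where k: "k<10" "c = vs!k" using assms(3) V_eq len_vs in_set_conv_nth by metis
  have d: "i\<noteq>j" "i\<noteq>k" "j\<noteq>k" using assms i j k by auto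
  have eq: "Nc a \<union> Nc b \<union> Nc c = (!) vs ` (set (tbl!i) \<union> set (tbl!j) \<union> set (tbl!k))"
    using Nc_idx i j k by (simp add: image_Un)
  have inj: "inj_on ((!) vs) (set (tbl!i) \<union> set (tbl!j) \<union> set (tbl!k))"
    apply (rule inj_on_nth[OF dvs])
    using tbl_sub[OF i(1)] tbl_sub[OF j(1)] tbl_sub[OF k(1)] len_vs by auto
  show ?thesis unfolding eq card_image[OF inj] using trip2[OF i(1) j(1) k(1) d] .
qed

lemma inv:
  assumes "hop_reach petersen_V petersen_E B st" "B \<subseteq> petersen_V" "card B \<le> 5"
  shows "fst st \<subseteq> petersen_V \<and> snd st \<subseteq> fst st \<and> card (fst st) = card B + card (snd st)
         \<and> (\<forall>v\<in>snd st. Nc v \<subseteq> fst st) \<and> card (snd st) \<le> 2"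
  using assms(1)
proof (induction rule: hop_reach.induct)
  case init
  then show ?case using assms by auto
next
  case (step S U v w)
  have SV: "S \<subseteq> petersen_V" and US: "U \<subseteq> S" and cS: "card S = card B + card U"
    and NU: "\<forall>u\<in>U. Nc u \<subseteq> S" and cU: "card U \<le> 2" using step.IH by auto
  have fS: "finite S" using SV fin_V finite_subset by blast
  have fU: "finite U" using US fS finite_subset by blast
  have Nv: "Nc v \<subseteq> S" using step.hyps(2,4) SV by (auto simp: Nc_def)
  have c1: "card (insert w S) = card S + 1" using fS step.hyps(6) by simp
  have c2: "card (insert v U) = card U + 1" using fU step.hyps(3) by simp
  have c3: "card (insert v U) \<le> 2"
  proof (rule ccontr)
    assume "\<not> card (insert v U) \<le> 2"
    then have "card U = 2" using c2 cU by simp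
    then obtain a b where ab: "U = {a,b}" "a \<noteq> b" by (auto simp: card_2_iff)
    have "8 \<le> card (Nc a \<union> Nc b \<union> Nc v)"
      apply (rule key) using ab US SV step.hyps(2,3) by auto
    also have "\<dots> \<le> card S"
      apply (rule card_mono[OF fS]) using NU Nv ab by auto
    finally show False using cS \<open>card U = 2\<close> assms(3) by simp
  qed
  show ?case using SV US cS NU Nv c1 c2 c3 step.hyps by auto
qed

lemma lower: "hopping_forcing_set petersen_V petersen_E B \<Longrightarrow> 6 \<le> card B"
proof (rule ccontr)
  assume h: "hopping_forcing_set petersen_V petersen_E B" "\<not> 6 \<le> card B"
  then obtain U where r: "hop_reach petersen_V petersen_E B (petersen_V, U)" and BV: "B \<subseteq> petersen_V"
    by (auto simp: hopping_forcing_set_def)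
  have "card petersen_V = card B + card U \<and> card U \<le> 2" using inv[OF r BV] h(2) by auto
  then show False using card_V h(2) by simp
qed

definition B0 :: "nat set set" where
  "B0 = {{0,1},{0,2},{0,3},{0,4},{1,2},{3,4}}"

lemma B0_sub: "B0 \<subseteq> petersen_V" unfolding V_eq B0_def vs_def by code_simp
lemma B0_card: "card B0 = 6" unfolding B0_def by code_simp

lemma E_simp: "petersen_E a u \<longleftrightarrow> a \<in> set vs \<and> u \<in> set vs \<and> a \<inter> u = {}"
  by (simp add: petersen_E_def V_eq)

lemma upper: "hopping_forcing_set petersen_V petersen_E B0"
proof -
  let ?V = petersen_V and ?E = petersen_E
  have r0: "hop_reach ?V ?E B0 (B0, {})" by (rule hop_reach.init)
  have r1: "hop_reach ?V ?E B0 (insert {1,3} B0, {{3,4}})"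
    apply (rule hop_reach.step[OF r0])
    unfolding V_eq E_simp B0_def vs_def by code_simp+
  have r2: "hop_reach ?V ?E B0 (insert {1,4} (insert {1,3} B0), {{1,2},{3,4}})"
    apply (rule hop_reach.step[OF r1])
    unfolding V_eq E_simp B0_def vs_def by code_simp+
  have r3: "hop_reach ?V ?E B0 (insert {2,3} (insert {1,4} (insert {1,3} B0)), {{0,2},{1,2},{3,4}})"
    apply (rule hop_reach.step[OF r2])
    unfolding V_eq E_simp B0_def vs_def by code_simp+
  have r4: "hop_reach ?V ?E B0 (insert {2,4} (insert {2,3} (insert {1,4} (insert {1,3} B0))), {{1,4},{0,2},{1,2},{3,4}})"
    apply (rule hop_reach.step[OF r3])
    unfolding V_eq E_simp B0_def vs_def by code_simp+
  have eq: "insert {2,4} (insert {2,3} (insert {1,4} (insert {1,3} B0))) = ?V"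
    unfolding V_eq B0_def vs_def by code_simp
  show ?thesis unfolding hopping_forcing_set_def using B0_sub r4 eq by auto
qed

theorem mainTheorem4:
  shows "hopping_number petersen_V petersen_E = 6"
  unfolding hopping_number_def
proof (rule Least_equality)
  show "\<exists>B. hopping_forcing_set petersen_V petersen_E B \<and> card B = 6"
    using upper B0_card by blast
  show "\<And>y. \<exists>B. hopping_forcing_set petersen_V petersen_E B \<and> card B = y \<Longrightarrow> 6 \<le> y"
    using lower by blast
qed

end
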